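(* Let $m\ge1$ and $k\ge 1$ be integers, and let $q_k=\lfloor mk/(m+1)\rfloor$. There are unique real numbers $a_{k,0,m}$ and $a_{k,l,r}$ ($1\le l\le q_k$, $0\le r\le m$) such that, in $\mathbb{R}[x]$, $$\big((x-1)^{\underline m}\big)^k=a_{k,0,m}(x-1)^{\underline m}+\sum_{l=1}^{q_k}\sum_{r=0}^m a_{k,l,r}\big((x)^{\underline{m+1}}\big)^l(x+r-m-1)^{\underline r}.$$
   Context: Falling factorials are $(y)^{\underline 0}=1$ and $(y)^{\underline j}=y(y-1)\cdots(y-j+1)$ for $j\ge 1$. *)

theory Defs
  imports "HOL-Computational_Algebra.Polynomial"
begin

definition ffpoly :: "real poly \<Rightarrow> nat \<Rightarrow> real poly" where
  "ffpoly y j = (\<Prod>i<j. y - [:of_nat i:])"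

end

theory Submission
  imports Defs
begin

lemma sum_add_split: "(\<Sum>j<a+b. g j) = (\<Sum>j<a. g j) + (\<Sum>r<b. g (a+r))"
  for g :: "nat \<Rightarrow> 'a::comm_monoid_add"
  by (induction b) (simp_all add: add.assoc)

lemma sum_blocks: "(\<Sum>j<n*(m+1). g j) = (\<Sum>l<n. \<Sum>r\<le>m. g (l*(m+1)+r))"
  for g :: "nat \<Rightarrow> 'a::comm_monoid_add"
proof (induction n)
  case 0 then show ?case by simp
next
  case (Suc n)
  have "(\<Sum>j<Suc n*(m+1). g j) = (\<Sum>j<n*(m+1) + (m+1). g j)" by (simp add: algebra_simps)
  also have "\<dots> = (\<Sum>j<n*(m+1). g j) + (\<Sum>r<m+1. g (n*(m+1)+r))" by (rule sum_add_split)
  finally show ?case unfolding sum.lessThan_Suc using Suc.IH by (simp add: lessThan_Suc_atMost)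
qed

lemma ffpoly_lin: "ffpoly [:c, 1:] r \<noteq> 0 \<and> degree (ffpoly [:c, 1:] r) = r"
proof -
  have e: "[:c, 1:] - [:of_nat i:] = [:c - of_nat i, 1:]" for i :: nat by simp
  have "degree (ffpoly [:c, 1:] r) = (\<Sum>i<r. degree ([:c, 1:] - [:of_nat i:]))"
    unfolding ffpoly_def by (rule degree_prod_sum_eq) (simp add: e)
  moreover have "ffpoly [:c, 1:] r \<noteq> 0" unfolding ffpoly_def by (simp add: e)
  ultimately show ?thesis by (simp add: e)
qed

lemma span_tri:
  fixes B :: "nat \<Rightarrow> 'a::field poly"
  assumes B: "\<And>j. B j \<noteq> 0 \<and> degree (B j) = j"
  shows "degree p < N \<or> p = 0 \<Longrightarrow> \<exists>c. p = (\<Sum>j<N. smult (c j) (B j))"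
proof (induction N arbitrary: p)
  case 0 then show ?case by auto
next
  case (Suc N)
  define d where "d = coeff p N / lead_coeff (B N)"
  define p' where "p' = p - smult d (B N)"
  have lc: "lead_coeff (B N) \<noteq> 0" using B[of N] by (metis leading_coeff_0_iff)
  have cN: "coeff p' N = 0" unfolding p'_def d_def using B[of N] lc by simp
  have "degree p' \<le> N" unfolding p'_def using Suc.prems B[of N]
    by (metis degree_diff_le degree_smult_le le_less_Suc_eq less_imp_le_nat not_le order_trans degree_0 le0)
  hence "degree p' < N \<or> p' = 0" using cN
    by (metis le_neq_implies_less leading_coeff_0_iff)
  then obtain c where c: "p' = (\<Sum>j<N. smult (c j) (B j))" using Suc.IH by blast
  have "p = (\<Sum>j<Suc N. smult ((c(N := d)) j) (B j))"
    using c unfolding p'_def by (simp add: algebra_simps)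
  then show ?case by blast
qed

lemma indep_tri:
  fixes B :: "nat \<Rightarrow> 'a::field poly"
  assumes B: "\<And>j. B j \<noteq> 0 \<and> degree (B j) = j"
  shows "(\<Sum>j<N. smult (c j) (B j)) = 0 \<Longrightarrow> \<forall>j<N. c j = 0"
proof (induction N)
  case 0 then show ?case by simp
next
  case (Suc N)
  have "coeff (\<Sum>j<Suc N. smult (c j) (B j)) N = c N * lead_coeff (B N)"
  proof -
    have "(\<Sum>j<N. c j * coeff (B j) N) = 0"
      using B by (intro sum.neutral) (simp add: coeff_eq_0)
    then show ?thesis using B[of N] by (simp add: coeff_sum)
  qed
  hence "c N * lead_coeff (B N) = 0" using Suc.prems by (metis coeff_0)
  hence "c N = 0" using B[of N] by (metis leading_coeff_0_iff mult_eq_0_iff)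
  hence "(\<Sum>j<N. smult (c j) (B j)) = 0" using Suc.prems by simp
  with Suc.IH `c N = 0` show ?case by (simp add: less_Suc_eq)
qed


lemma dm_simp: "r < n \<Longrightarrow> (l*n + r) div n = l \<and> (l*n + r) mod n = r" for n :: nat
  by simp

lemma dm2: "0 < n \<Longrightarrow> (n+j) div n = Suc (j div n) \<and> (n+j) mod n = j mod n" for n j :: nat
  by (metis add.commute div_add_self2 mod_add_self2 Suc_eq_plus1 less_numeral_extra(3))

lemma conv: "(\<Sum>l\<in>{1..q}. \<Sum>r\<in>{0..m}. f l r) = (\<Sum>j<q*(m+1). f (Suc (j div (m+1))) (j mod (m+1)))"
  for f :: "nat \<Rightarrow> nat \<Rightarrow> 'a::comm_monoid_add"
proof -
  have "(\<Sum>l\<in>{1..q}. \<Sum>r\<in>{0..m}. f l r) = (\<Sum>l<q. \<Sum>r\<le>m. f (Suc l) r)"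
  proof -
    have e: "{1..q} = Suc ` {..<q}" proof (rule set_eqI)
      fix x show "x \<in> {1..q} \<longleftrightarrow> x \<in> Suc ` {..<q}"
        by (cases x) auto
    qed
    show ?thesis unfolding e atLeast0AtMost by (simp add: sum.reindex)
  qed
  also have "\<dots> = (\<Sum>l<q. \<Sum>r\<le>m. f (Suc ((l*(m+1)+r) div (m+1))) ((l*(m+1)+r) mod (m+1)))"
  proof (intro sum.cong refl)
    fix l r assume "r \<in> {..m}"
    then have "r < m+1" by simp
    then have "(l*(m+1)+r) div (m+1) = l" "(l*(m+1)+r) mod (m+1) = r" using dm_simp[of r "m+1" l] by auto
    then show "f (Suc l) r = f (Suc ((l*(m+1)+r) div (m+1))) ((l*(m+1)+r) mod (m+1))" by (simp only:)
  qed
  also have "\<dots> = (\<Sum>j<q*(m+1). f (Suc (j div (m+1))) (j mod (m+1)))"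
    by (rule sum_blocks[symmetric])
  finally show ?thesis .
qed

theorem lemma6p1:
  fixes m k :: nat
  assumes "m \<ge> 1" and "k \<ge> 1"
  defines "q \<equiv> (m * k) div (m + 1)"
  shows "\<exists>a0 (a :: nat \<Rightarrow> nat \<Rightarrow> real).
     (ffpoly [:-1, 1:] m) ^ k =
        smult a0 (ffpoly [:-1, 1:] m)
        + (\<Sum>l\<in>{1..q}. \<Sum>r\<in>{0..m}.
             smult (a l r) ((ffpoly [:0, 1:] (m + 1)) ^ l
                            * ffpoly [:of_nat r - of_nat m - 1, 1:] r))
     \<and> (\<forall>b0 (b :: nat \<Rightarrow> nat \<Rightarrow> real).
          (ffpoly [:-1, 1:] m) ^ k =
            smult b0 (ffpoly [:-1, 1:] m)
            + (\<Sum>l\<in>{1..q}. \<Sum>r\<in>{0..m}.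
                 smult (b l r) ((ffpoly [:0, 1:] (m + 1)) ^ l
                                * ffpoly [:of_nat r - of_nat m - 1, 1:] r))
          \<longrightarrow> b0 = a0 \<and> (\<forall>l\<in>{1..q}. \<forall>r\<in>{0..m}. b l r = a l r))"
proof -
  define P where "P = ffpoly [:-1, 1:] m"
  define F where "F = ffpoly [:0, 1:] (m + 1)"
  define G where "G = (\<lambda>r::nat. ffpoly [:of_nat r - of_nat m - 1, 1:] r)"
  define B where "B = (\<lambda>j. F ^ (j div (m+1)) * G (j mod (m+1)))"
  have GP: "G m = P" unfolding G_def P_def by simp
  have FP: "F = [:0,1:] * P"
  proof -
    have "F = ([:0,1:] - [:of_nat 0:]) * (\<Prod>i<m. [:0,1:] - [:of_nat (Suc i):])"
      unfolding F_def ffpoly_def by (simp only: prod.lessThan_Suc_shift Suc_eq_plus1[symmetric])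
    also have "\<dots> = [:0,1:] * P"
      unfolding P_def ffpoly_def by (simp add: of_nat_Suc)
    finally show ?thesis .
  qed
  have Fnz: "F \<noteq> 0" and Fdeg: "degree F = m+1" using ffpoly_lin[of 0 "m+1"] unfolding F_def by auto
  have Gnz: "G r \<noteq> 0" and Gdeg: "degree (G r) = r" for r using ffpoly_lin unfolding G_def by auto
  have Bok: "B j \<noteq> 0 \<and> degree (B j) = j" for j
  proof -
    have "degree (B j) = j div (m+1) * (m+1) + j mod (m+1)"
      unfolding B_def using Fnz Gnz by (simp add: degree_mult_eq degree_power_eq Fdeg Gdeg)
    also have "\<dots> = j" by (rule div_mult_mod_eq)
    finally show ?thesis unfolding B_def using Fnz Gnz by simp
  qed
  have sum_eq: "(\<Sum>l\<in>{1..q}. \<Sum>r\<in>{0..m}. smult (f l r) (F ^ l * G r))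
     = (\<Sum>j<q*(m+1). smult (f (Suc (j div (m+1))) (j mod (m+1))) (B (m+1+j)))" for f
  proof -
    have "(\<Sum>l\<in>{1..q}. \<Sum>r\<in>{0..m}. smult (f l r) (F ^ l * G r))
      = (\<Sum>j<q*(m+1). smult (f (Suc (j div (m+1))) (j mod (m+1))) (F ^ (Suc (j div (m+1))) * G (j mod (m+1))))"
      by (rule conv)
    also have "\<dots> = (\<Sum>j<q*(m+1). smult (f (Suc (j div (m+1))) (j mod (m+1))) (B (m+1+j)))"
    proof (intro sum.cong refl)
      fix j
      have "(m+1+j) div (m+1) = Suc (j div (m+1))" "(m+1+j) mod (m+1) = j mod (m+1)" using dm2[of "m+1" j] by auto
      then show "smult (f (Suc (j div (m+1))) (j mod (m+1))) (F ^ (Suc (j div (m+1))) * G (j mod (m+1)))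
        = smult (f (Suc (j div (m+1))) (j mod (m+1))) (B (m+1+j))" unfolding B_def by simp
    qed
    finally show ?thesis .
  qed
  have qb: "m*k < q*(m+1) + (m+1)"
  proof -
    have "m*k = q*(m+1) + m*k mod (m+1)" unfolding q_def by (rule div_mult_mod_eq[symmetric])
    moreover have "m*k mod (m+1) < m+1" by simp
    ultimately show ?thesis by linarith
  qed
  define c0 where "c0 = poly P 0 ^ (k-1)"
  have "poly (P^(k-1) - [:c0:]) 0 = 0" unfolding c0_def by simp
  then obtain h where h: "P^(k-1) - [:c0:] = [:0,1:] * h"
    using poly_eq_0_iff_dvd[of "P^(k-1) - [:c0:]" 0] by (auto elim: dvdE)
  have Pk: "P^k - smult c0 P = F * h"
  proof -
    have "P^k = P * P^(k-1)" using assms(2) by (metis Suc_diff_1 less_le_trans power_Suc zero_less_one)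
    then have "P^k - smult c0 P = P * (P^(k-1) - [:c0:])" by (simp add: algebra_simps)
    then show ?thesis using h FP by (simp add: algebra_simps)
  qed
  have dk: "degree (P^k - smult c0 P) \<le> m*k"
  proof -
    have dP: "degree P = m" using ffpoly_lin unfolding P_def by auto
    have "degree (P^k) \<le> m*k" using degree_power_le[of P k] dP by (simp add: mult.commute)
    moreover have "degree (smult c0 P) \<le> m*k" using degree_smult_le[of c0 P] dP assms(2)
      by (metis le_trans mult.right_neutral mult_le_mono2)
    ultimately show ?thesis by (meson degree_diff_le)
  qed
  have hd: "degree h < q*(m+1) \<or> h = 0"
  proof (cases "h = 0")
    case False
    then have "degree (F*h) = m+1 + degree h" using Fnz by (simp add: degree_mult_eq Fdeg)
    then have "m + 1 + degree h \<le> m*k" using dk Pk by simp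
    then show ?thesis using qb by linarith
  qed simp
  obtain c where c: "h = (\<Sum>j<q*(m+1). smult (c j) (B j))"
    using span_tri[of B, OF Bok, OF hd] by blast
  define a where "a = (\<lambda>l r. c ((l-1)*(m+1)+r))"
  have ex: "P ^ k = smult c0 P + (\<Sum>l\<in>{1..q}. \<Sum>r\<in>{0..m}. smult (a l r) (F ^ l * G r))"
  proof -
    have "(\<Sum>l\<in>{1..q}. \<Sum>r\<in>{0..m}. smult (a l r) (F ^ l * G r))
        = (\<Sum>j<q*(m+1). smult (c j) (F * B j))"
      unfolding sum_eq
    proof (intro sum.cong refl)
      fix j
      have "a (Suc (j div (m+1))) (j mod (m+1)) = c j" unfolding a_def
        using div_mult_mod_eq[of j "m+1"] by (simp only: diff_Suc_1)
      moreover have "B (m+1+j) = F * B j"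
      proof -
        have "(m+1+j) div (m+1) = Suc (j div (m+1))" "(m+1+j) mod (m+1) = j mod (m+1)" using dm2[of "m+1" j] by auto
        then show ?thesis unfolding B_def by simp
      qed
      ultimately show "smult (a (Suc (j div (m+1))) (j mod (m+1))) (B (m+1+j)) = smult (c j) (F * B j)"
        by simp
    qed
    also have "\<dots> = F * h" unfolding c by (simp add: sum_distrib_left mult_smult_right)
    finally show ?thesis using Pk by (simp add: algebra_simps)
  qed
  have un: "b0 = c0 \<and> (\<forall>l\<in>{1..q}. \<forall>r\<in>{0..m}. b l r = a l r)"
    if hb: "P ^ k = smult b0 P + (\<Sum>l\<in>{1..q}. \<Sum>r\<in>{0..m}. smult (b l r) (F ^ l * G r))" for b0 b
  proof -
    define d where "d = (\<lambda>l r. b l r - a l r)"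
    have "smult (b0 - c0) P + (\<Sum>l\<in>{1..q}. \<Sum>r\<in>{0..m}. smult (d l r) (F ^ l * G r)) = 0"
      using hb ex unfolding d_def
      by (simp add: smult_diff_left sum_subtractf algebra_simps)
    then have z: "smult (b0 - c0) P + (\<Sum>j<q*(m+1). smult (d (Suc (j div (m+1))) (j mod (m+1))) (B (m+1+j))) = 0"
      unfolding sum_eq .
    define E where "E = (\<lambda>j. if j < m then 0 else if j = m then b0 - c0
        else d (Suc ((j-(m+1)) div (m+1))) ((j-(m+1)) mod (m+1)))"
    have "(\<Sum>j<(m+1) + q*(m+1). smult (E j) (B j))
        = (\<Sum>j<m+1. smult (E j) (B j)) + (\<Sum>j<q*(m+1). smult (E (m+1+j)) (B (m+1+j)))"
      by (rule sum_add_split)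
    also have "(\<Sum>j<m+1. smult (E j) (B j)) = smult (b0 - c0) P"
      unfolding E_def using GP by (simp add: B_def)
    also have "(\<Sum>j<q*(m+1). smult (E (m+1+j)) (B (m+1+j)))
        = (\<Sum>j<q*(m+1). smult (d (Suc (j div (m+1))) (j mod (m+1))) (B (m+1+j)))"
      unfolding E_def by simp
    finally have "(\<Sum>j<(m+1) + q*(m+1). smult (E j) (B j)) = 0" using z by simp
    then have E0: "\<forall>j<(m+1) + q*(m+1). E j = 0" by (rule indep_tri[of B, OF Bok])
    have "E m = 0" using E0 by simp
    then have "b0 = c0" unfolding E_def by simp
    moreover have "b l r = a l r" if l: "l \<in> {1..q}" and r: "r \<in> {0..m}" for l r
    proof -
      define j where "j = m+1 + ((l-1)*(m+1) + r)"
      have "(l-1)*(m+1) + r < q*(m+1)"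
      proof -
        have "(l-1)*(m+1) + r < (l-1)*(m+1) + (m+1)" using r by simp
        also have "\<dots> = l*(m+1)" using l by (cases l) auto
        also have "\<dots> \<le> q*(m+1)" using l by (intro mult_le_mono1) simp
        finally show ?thesis .
      qed
      then have "j < (m+1) + q*(m+1)" unfolding j_def by simp
      then have "E j = 0" using E0 by simp
      moreover have "E j = d l r"
      proof -
        have "((l-1)*(m+1) + r) div (m+1) = l-1" "((l-1)*(m+1) + r) mod (m+1) = r"
          using r dm_simp[of r "m+1" "l-1"] by auto
        moreover have "j - (m+1) = (l-1)*(m+1) + r" "\<not> j < m" "j \<noteq> m" unfolding j_def by auto
        ultimately have "E j = d (Suc (l-1)) r" unfolding E_def by (simp only: if_False)
        then show ?thesis using l by simp
      qed
      ultimately show ?thesis unfolding d_def by simp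
    qed
    ultimately show ?thesis by blast
  qed
  show ?thesis
    using ex un unfolding P_def F_def G_def by blast
qed

end
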